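(* Suppose $x^*\sim\mathcal{N}(\mu\mathbf{1}_n,\mathrm{diag}(s_1^2,\dots,s_n^2))$ for some $\mu\in\mathbb{R}$, $s_i\ge0$, and that $x^*$ is independent of the noise $e$, which has mean $0$ and covariance $\Sigma=\mathrm{diag}(\sigma_1^2,\dots,\sigma_n^2)$ with $\sigma_1^2\ge\cdots\ge\sigma_n^2\ge0$. Let $\bar s=\frac1n\sum_{i=1}^ns_i^2$ and $\bar\sigma=\frac{1}{n-1}\sum_{i=2}^n\sigma_i^2$. Then for every $\alpha>0$, $$\mathrm{MSE}(\alpha)\le\Big(\frac{1}{1+\frac{1}{\alpha\lambda_n}}\Big)^2(n-1)\bar s+\Big(\frac{1}{1+\alpha\lambda_2}\Big)^2(n-1)\bar\sigma+\sigma_1^2.$$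
   Context: Let $G$ be a weighted undirected connected simple graph on $n\ge2$ nodes with symmetric weight matrix $W$ (zero diagonal, $W_{ij}>0$ exactly on edges) and Laplacian $L=\mathrm{diag}(W\mathbf{1}_n)-W$, whose eigenvalues are $0=\lambda_1<\lambda_2\le\cdots\le\lambda_n$. Observation model: $y=x^*+e$. For $\alpha>0$, $\hat x=(I+\alpha L)^{-1}y$ and $\mathrm{MSE}(\alpha)=\mathbb{E}\|\hat x-x^*\|_2^2$, where the expectation is over both $x^*$ and $e$. *)

theory Defs
  imports "HOL-Probability.Probability"
    "Jordan_Normal_Form.Char_Poly"
    "Jordan_Normal_Form.Gauss_Jordan_Elimination"
begin

(* Nodes are 0,...,n-1 (paper: 1,...,n). *)

definition graph_edges :: "nat \<Rightarrow> real mat \<Rightarrow> (nat \<times> nat) set" where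
  "graph_edges n W = {(i, j). i < n \<and> j < n \<and> W $$ (i, j) > 0}"

definition weighted_connected_graph :: "nat \<Rightarrow> real mat \<Rightarrow> bool" where
  "weighted_connected_graph n W \<longleftrightarrow>
     W \<in> carrier_mat n n \<and>
     (\<forall>i<n. \<forall>j<n. W $$ (i, j) = W $$ (j, i)) \<and>
     (\<forall>i<n. W $$ (i, i) = 0) \<and>
     (\<forall>i<n. \<forall>j<n. W $$ (i, j) \<ge> 0) \<and>
     (\<forall>i<n. \<forall>j<n. (i, j) \<in> (graph_edges n W)\<^sup>*)"

definition laplacian :: "nat \<Rightarrow> real mat \<Rightarrow> real mat" where
  "laplacian n W = mat n n (\<lambda>(i, j). (if i = j then (\<Sum>k<n. W $$ (i, k)) else 0) - W $$ (i, j))"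

(* eigenvalues (with multiplicity) in increasing order: lambda_k = eigs ! (k-1) *)
definition eigs :: "real mat \<Rightarrow> real list" where
  "eigs A = sorted_list_of_multiset (proots (char_poly A))"

definition gaussian :: "real \<Rightarrow> real \<Rightarrow> real measure" where
  "gaussian m s = (if s = 0 then return borel m else density lborel (normal_density m s))"

definition smoothing_mse ::
  "'w measure \<Rightarrow> nat \<Rightarrow> real mat \<Rightarrow> (nat \<Rightarrow> 'w \<Rightarrow> real) \<Rightarrow> (nat \<Rightarrow> 'w \<Rightarrow> real) \<Rightarrow> real \<Rightarrow> real"
  where
  "smoothing_mse M n W X E \<alpha> =
     integral\<^sup>L M (\<lambda>\<omega>.
       let y = vec n (\<lambda>j. X j \<omega> + E j \<omega>);
           xh = the (mat_inverse (1\<^sub>m n + \<alpha> \<cdot>\<^sub>m laplacian n W)) *\<^sub>v y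
       in \<Sum>i<n. (xh $ i - X i \<omega>)\<^sup>2)"

end

theory Submission
  imports Defs "HOL-Combinatorics.List_Permutation"
begin
unbundle no vec_syntax

lemma real_sym_eig:
  fixes C :: "real mat"
  assumes C: "C \<in> carrier_mat m m" and m: "m > 0"
    and sym: "\<forall>i<m. \<forall>j<m. C$$(i,j) = C$$(j,i)"
  shows "\<exists>lam c. c \<in> carrier_vec m \<and> (\<Sum>i<m. (c$i)^2) = 1 \<and>
           (\<forall>i<m. (\<Sum>j<m. C$$(i,j) * c$j) = lam * c$i)"
proof -
  define Cc where "Cc = map_mat complex_of_real C"
  have Cc: "Cc \<in> carrier_mat m m" using C unfolding Cc_def by auto
  obtain as where as: "char_poly Cc = (\<Prod>a\<leftarrow>as. [:- a, 1:])" "length as = m"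
    using char_poly_factorized[OF Cc] by blast
  then obtain la as' where asc: "as = la # as'" using m by (cases as) auto
  have "poly (char_poly Cc) la = 0" unfolding as(1) asc by simp
  hence "eigenvalue Cc la" using eigenvalue_root_char_poly[OF Cc] by simp
  from find_eigenvector[OF Cc this]
  obtain v where ev: "eigenvector Cc v la" by blast
  hence v: "v \<in> carrier_vec m" "v \<noteq> 0\<^sub>v m" "Cc *\<^sub>v v = la \<cdot>\<^sub>v v"
    unfolding eigenvector_def using Cc by auto
  have eq: "(\<Sum>j<m. complex_of_real (C$$(i,j)) * v$j) = la * v$i" if i: "i < m" for i
  proof -
    have "(Cc *\<^sub>v v) $ i = (la \<cdot>\<^sub>v v) $ i" using v(3) by simp
    also have "(la \<cdot>\<^sub>v v) $ i = la * v $ i" using i v(1) by simp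
    also have "(Cc *\<^sub>v v) $ i = (\<Sum>j<m. Cc $$ (i,j) * v$j)"
      using i v(1) Cc by (simp add: scalar_prod_def atLeast0LessThan)
    finally show ?thesis using i C unfolding Cc_def by (simp add: mult_ac)
  qed
  define S where "S = (\<Sum>i<m. \<Sum>j<m. complex_of_real (C$$(i,j)) * cnj (v$i) * v$j)"
  have "cnj S = (\<Sum>i<m. \<Sum>j<m. complex_of_real (C$$(i,j)) * v$i * cnj (v$j))"
    unfolding S_def by (simp add: cnj_sum)
  also have "\<dots> = (\<Sum>j<m. \<Sum>i<m. complex_of_real (C$$(i,j)) * v$i * cnj (v$j))"
    by (rule sum.swap)
  also have "\<dots> = S" unfolding S_def
    by (intro sum.cong refl, insert sym, auto simp: mult_ac)
  finally have cS: "cnj S = S" .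
  define N where "N = (\<Sum>i<m. (cmod (v$i))^2)"
  have "S = (\<Sum>i<m. cnj (v$i) * (\<Sum>j<m. complex_of_real (C$$(i,j)) * v$j))"
    unfolding S_def by (simp add: sum_distrib_left mult_ac)
  also have "\<dots> = (\<Sum>i<m. la * (cnj (v$i) * v$i))"
    apply (rule sum.cong[OF refl]) apply (subst eq) by auto
  also have "\<dots> = la * complex_of_real N"
    unfolding N_def by (simp add: sum_distrib_left complex_norm_square[symmetric] mult_ac)
  finally have SN: "S = la * complex_of_real N" .
  obtain i0 where i0: "i0 < m" "v$i0 \<noteq> 0" using v(1,2) by (metis carrier_vecD eq_vecI index_zero_vec)
  have "N > 0" unfolding N_def
    by (rule sum_pos2[of _ i0], insert i0, auto)
  have "Im S = 0" using arg_cong[OF cS, of Im] by simp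
  hence "Im la * N = 0" using SN by simp
  hence Im0: "Im la = 0" using \<open>N > 0\<close> by simp
  define lam where "lam = Re la"
  have la: "la = complex_of_real lam" using Im0 unfolding lam_def by (simp add: complex_eq_iff)
  define a where "a = (\<lambda>j. Re (v$j))"
  define b where "b = (\<lambda>j. Im (v$j))"
  have ea: "(\<Sum>j<m. C$$(i,j) * a j) = lam * a i" if "i < m" for i
  proof -
    have "Re (\<Sum>j<m. complex_of_real (C$$(i,j)) * v$j) = Re (la * v$i)" using eq[OF that] by simp
    thus ?thesis unfolding a_def la by (simp add: Re_sum)
  qed
  have eb: "(\<Sum>j<m. C$$(i,j) * b j) = lam * b i" if "i < m" for i
  proof -
    have "Im (\<Sum>j<m. complex_of_real (C$$(i,j)) * v$j) = Im (la * v$i)" using eq[OF that] by simp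
    thus ?thesis unfolding b_def la by (simp add: Im_sum)
  qed
  obtain w where w: "\<forall>i<m. (\<Sum>j<m. C$$(i,j) * w j) = lam * w i" "w i0 \<noteq> 0"
  proof (cases "a i0 = 0")
    case True
    hence "b i0 \<noteq> 0" using i0 unfolding a_def b_def by (simp add: complex_eq_iff)
    thus ?thesis using that[of b] eb by auto
  next
    case False
    thus ?thesis using that[of a] ea by auto
  qed
  define q where "q = (\<Sum>i<m. (w i)^2)"
  have "q > 0" unfolding q_def by (rule sum_pos2[of _ i0], insert i0 w, auto)
  define c where "c = vec m (\<lambda>i. w i / sqrt q)"
  show ?thesis
  proof (intro exI conjI allI impI)
    show "c \<in> carrier_vec m" unfolding c_def by simp
    have "(\<Sum>i<m. (c$i)^2) = (\<Sum>i<m. (w i)^2 / q)"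
      unfolding c_def using \<open>q > 0\<close> by (intro sum.cong refl) (simp add: power_divide)
    also have "\<dots> = 1" using \<open>q > 0\<close> unfolding q_def[symmetric] sum_divide_distrib[symmetric] by simp
    finally show "(\<Sum>i<m. (c$i)^2) = 1" .
    fix i assume i: "i < m"
    have "(\<Sum>j<m. C$$(i,j) * c$j) = (\<Sum>j<m. C$$(i,j) * w j) / sqrt q"
      unfolding c_def by (simp add: sum_divide_distrib)
    also have "\<dots> = lam * c$i" using w(1) i unfolding c_def by simp
    finally show "(\<Sum>j<m. C$$(i,j) * c$j) = lam * c$i" .
  qed
qed

definition orthm :: "nat \<Rightarrow> (nat \<Rightarrow> nat \<Rightarrow> real) \<Rightarrow> bool" where
  "orthm n U \<longleftrightarrow> (\<forall>i<n. \<forall>j<n. (\<Sum>r<n. U r i * U r j) = (if i = j then 1 else 0)) \<and>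
                  (\<forall>i<n. \<forall>j<n. (\<Sum>r<n. U i r * U j r) = (if i = j then 1 else 0))"

lemma kron_sum1: "l < (n::nat) \<Longrightarrow> (\<Sum>p<n. f p * (if l = p then 1 else (0::real))) = f l"
  by (simp add: if_distrib sum.delta sum.delta' cong: if_cong)

lemma kron_sum2: "l < (n::nat) \<Longrightarrow> (\<Sum>p<n. f p * (if p = l then 1 else (0::real))) = f l"
  by (simp add: if_distrib sum.delta sum.delta' cong: if_cong)

lemma sum_prod_swap:
  fixes a :: "nat \<Rightarrow> nat \<Rightarrow> real"
  shows "(\<Sum>r<n. (\<Sum>l<n. a r l * x l) * (\<Sum>p<n. b r p * y p)) =
         (\<Sum>l<n. \<Sum>p<n. x l * y p * (\<Sum>r<n. a r l * b r p))"
proof -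
  have "(\<Sum>r<n. (\<Sum>l<n. a r l * x l) * (\<Sum>p<n. b r p * y p)) =
        (\<Sum>r<n. \<Sum>l<n. \<Sum>p<n. x l * y p * (a r l * b r p))"
    by (simp add: sum_product mult_ac)
  also have "\<dots> = (\<Sum>l<n. \<Sum>r<n. \<Sum>p<n. x l * y p * (a r l * b r p))"
    by (rule sum.swap)
  also have "\<dots> = (\<Sum>l<n. \<Sum>p<n. \<Sum>r<n. x l * y p * (a r l * b r p))"
    by (rule sum.cong[OF refl], rule sum.swap)
  also have "\<dots> = (\<Sum>l<n. \<Sum>p<n. x l * y p * (\<Sum>r<n. a r l * b r p))"
    by (simp add: sum_distrib_left)
  finally show ?thesis .
qed

lemma orthm_mult:
  assumes U: "orthm n U" and V: "orthm n V"
  shows "orthm n (\<lambda>r j. \<Sum>l<n. U r l * V l j)"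
proof -
  have c: "(\<Sum>r<n. (\<Sum>l<n. U r l * V l i) * (\<Sum>p<n. U r p * V p j)) = (if i = j then 1 else 0)"
    if "i < n" "j < n" for i j
  proof -
    have "(\<Sum>r<n. (\<Sum>l<n. U r l * V l i) * (\<Sum>p<n. U r p * V p j)) =
          (\<Sum>l<n. \<Sum>p<n. V l i * V p j * (\<Sum>r<n. U r l * U r p))"
      by (rule sum_prod_swap)
    also have "\<dots> = (\<Sum>l<n. \<Sum>p<n. V l i * V p j * (if l = p then 1 else 0))"
      using U unfolding orthm_def by (intro sum.cong refl) auto
    also have "\<dots> = (\<Sum>l<n. V l i * V l j)"
      by (intro sum.cong refl) (simp add: kron_sum1)
    also have "\<dots> = (if i = j then 1 else 0)" using V that unfolding orthm_def by auto
    finally show ?thesis .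
  qed
  have r: "(\<Sum>j<n. (\<Sum>l<n. U r l * V l j) * (\<Sum>p<n. U t p * V p j)) = (if r = t then 1 else 0)"
    if "r < n" "t < n" for r t
  proof -
    have "(\<Sum>j<n. (\<Sum>l<n. U r l * V l j) * (\<Sum>p<n. U t p * V p j)) =
          (\<Sum>l<n. \<Sum>p<n. U r l * U t p * (\<Sum>j<n. V l j * V p j))"
      using sum_prod_swap[where a="\<lambda>j l. V l j" and x="U r" and b="\<lambda>j p. V p j" and y="U t" and n=n]
      by (simp add: mult_ac)
    also have "\<dots> = (\<Sum>l<n. \<Sum>p<n. U r l * U t p * (if l = p then 1 else 0))"
      using V unfolding orthm_def by (intro sum.cong refl) auto
    also have "\<dots> = (\<Sum>l<n. U r l * U t l)"
      by (intro sum.cong refl) (simp add: kron_sum1)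
    also have "\<dots> = (if r = t then 1 else 0)" using U that unfolding orthm_def by auto
    finally show ?thesis .
  qed
  show ?thesis unfolding orthm_def using c r by auto
qed

lemma orthm_id: "orthm n (\<lambda>i j. if i = j then 1 else 0)"
proof -
  have "(\<Sum>r<n. (if i = r then 1 else 0) * (if j = r then 1 else (0::real))) = (if i = j then 1 else 0)"
    if "j < n" for i j using kron_sum1[OF that, of "\<lambda>r. if i = r then 1 else 0"] by simp
  moreover have "(\<Sum>r<n. (if r = i then 1 else 0) * (if r = j then 1 else (0::real))) = (if i = j then 1 else 0)"
    if "j < n" for i j using kron_sum2[OF that, of "\<lambda>r. if r = i then 1 else 0"] by simp
  ultimately show ?thesis unfolding orthm_def by auto
qed

definition householder :: "nat \<Rightarrow> (nat \<Rightarrow> real) \<Rightarrow> nat \<Rightarrow> nat \<Rightarrow> real" where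
  "householder n w = (let s = (\<Sum>l<n. (w l)^2) in
     if s = 0 then (\<lambda>i j. if i = j then 1 else 0) else (\<lambda>i j. (if i = j then 1 else 0) - 2 * w i * w j / s))"

lemma orthm_householder: "orthm n (householder n w)"
proof -
  define s where "s = (\<Sum>l<n. (w l)^2)"
  show ?thesis
  proof (cases "s = 0")
    case True thus ?thesis unfolding householder_def s_def[symmetric] Let_def using orthm_id by simp
  next
    case False
    have H: "householder n w = (\<lambda>i j. (if i = j then 1 else 0) - 2 * w i * w j / s)"
      unfolding householder_def s_def[symmetric] Let_def using False by simp
    have k: "(\<Sum>l<n. ((if l = i then 1 else 0) - 2 * w l * w i / s) * ((if l = j then 1 else 0) - 2 * w l * w j / s))
          = (if i = j then 1 else 0)" if "i < n" "j < n" for i j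
    proof -
      have "(\<Sum>l<n. ((if l = i then 1 else 0) - 2 * w l * w i / s) * ((if l = j then 1 else 0) - 2 * w l * w j / s))
         = (\<Sum>l<n. (if l = i then 1 else 0) * (if l = j then 1 else 0)) 
           - (\<Sum>l<n. (if l = i then 1 else 0) * (2 * w l * w j / s))
           - (\<Sum>l<n. (2 * w l * w i / s) * (if l = j then 1 else 0))
           + (\<Sum>l<n. (2 * w l * w i / s) * (2 * w l * w j / s))"
        by (simp add: sum_subtractf[symmetric] sum.distrib[symmetric] algebra_simps)
      also have "(\<Sum>l<n. (if l = i then 1 else 0) * (if l = j then 1 else (0::real))) = (if i = j then 1 else 0)"
        using that kron_sum2[of j n "\<lambda>l. if l = i then 1 else 0"] by simp
      also have "(\<Sum>l<n. (if l = i then 1 else 0) * (2 * w l * w j / s)) = 2 * w i * w j / s"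
        using that kron_sum2[of i n "\<lambda>l. 2 * w l * w j / s"] by (simp add: mult.commute)
      also have "(\<Sum>l<n. (2 * w l * w i / s) * (if l = j then 1 else 0)) = 2 * w i * w j / s"
        using that kron_sum2[of j n "\<lambda>l. 2 * w l * w i / s"] by (simp add: mult.commute)
      also have "(\<Sum>l<n. (2 * w l * w i / s) * (2 * w l * w j / s)) = 4 * w i * w j * s / s^2"
        unfolding s_def by (simp add: sum_distrib_left sum_divide_distrib power2_eq_square mult_ac)
      also have "4 * w i * w j * s / s^2 = 4 * w i * w j / s" using False by (simp add: power2_eq_square)
      finally show ?thesis by simp
    qed
    have hs: "householder n w i j = householder n w j i" for i j unfolding H by (auto simp: mult_ac)
    have c: "(\<Sum>r<n. householder n w r i * householder n w r j) = (if i = j then 1 else 0)"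
      if "i < n" "j < n" for i j using k[OF that] unfolding H by simp
    show ?thesis unfolding orthm_def using c hs by auto
  qed
qed

lemma swap2: "(\<Sum>s\<in>S. f s * (\<Sum>l\<in>T. g s l)) = (\<Sum>l\<in>T. \<Sum>s\<in>S. f s * g s l :: real)"
  by (simp add: sum_distrib_left) (rule sum.swap)

lemma sum_shift_zero:
  fixes g :: "nat \<Rightarrow> real"
  assumes "k \<le> n" "\<And>j. j < k \<Longrightarrow> g j = 0"
  shows "(\<Sum>j<n. g j) = (\<Sum>j<n-k. g (j + k))"
proof -
  have "{..<n} = {..<k} \<union> {k..<n}" using assms(1) by auto
  hence "(\<Sum>j<n. g j) = (\<Sum>j<k. g j) + (\<Sum>j\<in>{k..<n}. g j)"
    by (metis finite_lessThan finite_atLeastLessThan sum.union_disjoint ivl_disj_int_one(2) lessThan_atLeast0)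
  also have "(\<Sum>j<k. g j) = 0" using assms(2) by simp
  also have "(\<Sum>j\<in>{k..<n}. g j) = (\<Sum>j\<in>{0+k..<(n-k)+k}. g j)" using assms(1) by simp
  also have "\<dots> = (\<Sum>j\<in>{0..<n-k}. g (j + k))" by (rule sum.shift_bounds_nat_ivl)
  finally show ?thesis by (simp add: atLeast0LessThan)
qed

lemma spectral_step:
  fixes a :: "nat \<Rightarrow> nat \<Rightarrow> real"
  assumes sym: "\<forall>i<n. \<forall>j<n. a i j = a j i"
    and kn: "k < n"
    and U: "orthm n U"
    and ev: "\<forall>j<k. \<forall>r<n. (\<Sum>s<n. a r s * U s j) = \<nu> j * U r j"
  shows "\<exists>U' \<nu>'. orthm n U' \<and> (\<forall>j<Suc k. \<forall>r<n. (\<Sum>s<n. a r s * U' s j) = \<nu>' j * U' r j)"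
proof -
  define B where "B i j = (\<Sum>s<n. (\<Sum>r<n. U r i * a r s) * U s j)" for i j
  have B0: "B i j = 0" if "i < k" "j < n" "j \<noteq> i" for i j
  proof -
    have "B i j = (\<Sum>s<n. (\<nu> i * U s i) * U s j)" unfolding B_def
    proof (rule sum.cong[OF refl])
      fix s assume s: "s \<in> {..<n}"
      have "(\<Sum>r<n. U r i * a r s) = (\<Sum>r<n. a s r * U r i)"
        using sym s by (intro sum.cong refl) (auto simp: mult.commute)
      also have "\<dots> = \<nu> i * U s i" using ev that s kn by auto
      finally show "(\<Sum>r<n. U r i * a r s) * U s j = (\<nu> i * U s i) * U s j" by simp
    qed
    also have "\<dots> = \<nu> i * (\<Sum>s<n. U s i * U s j)" by (simp add: sum_distrib_left mult_ac)
    also have "\<dots> = 0" using U that kn unfolding orthm_def by auto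
    finally show ?thesis .
  qed
  have Bsym: "B i j = B j i" if "i < n" "j < n" for i j
  proof -
    have "B i j = (\<Sum>s<n. \<Sum>r<n. U r i * a r s * U s j)" unfolding B_def by (simp add: sum_distrib_right)
    also have "\<dots> = (\<Sum>r<n. \<Sum>s<n. U r i * a r s * U s j)" by (rule sum.swap)
    also have "\<dots> = (\<Sum>r<n. \<Sum>s<n. U s j * a s r * U r i)"
      using sym by (intro sum.cong refl) (auto simp: mult_ac)
    also have "\<dots> = B j i" unfolding B_def by (simp add: sum_distrib_right)
    finally show ?thesis .
  qed
  have UB: "(\<Sum>p<n. U r p * B p l) = (\<Sum>s<n. a r s * U s l)" if "r < n" "l < n" for r l
  proof -
    have "(\<Sum>p<n. U r p * B p l) = (\<Sum>p<n. \<Sum>s<n. \<Sum>q<n. U r p * U q p * a q s * U s l)"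
      unfolding B_def by (simp add: sum_distrib_left sum_distrib_right mult_ac)
    also have "\<dots> = (\<Sum>s<n. \<Sum>p<n. \<Sum>q<n. U r p * U q p * a q s * U s l)" by (rule sum.swap)
    also have "\<dots> = (\<Sum>s<n. \<Sum>q<n. \<Sum>p<n. U r p * U q p * a q s * U s l)"
      by (rule sum.cong[OF refl], rule sum.swap)
    also have "\<dots> = (\<Sum>s<n. \<Sum>q<n. (\<Sum>p<n. U r p * U q p) * (a q s * U s l))"
      by (simp add: sum_distrib_right sum_distrib_left mult_ac)
    also have "\<dots> = (\<Sum>s<n. \<Sum>q<n. (a q s * U s l) * (if r = q then 1 else 0))"
      using U that unfolding orthm_def by (intro sum.cong refl) auto
    also have "\<dots> = (\<Sum>s<n. a r s * U s l)"
      using kron_sum1[OF that(1)] by simp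
    finally show ?thesis .
  qed
  define m where "m = n - k"
  have m: "m > 0" using kn unfolding m_def by simp
  define C where "C = mat m m (\<lambda>(i,j). B (i+k) (j+k))"
  have Cc: "C \<in> carrier_mat m m" unfolding C_def by simp
  have Csym: "\<forall>i<m. \<forall>j<m. C$$(i,j) = C$$(j,i)"
    unfolding C_def m_def using Bsym by auto
  obtain lam c where c: "c \<in> carrier_vec m" "(\<Sum>i<m. (c$i)^2) = 1"
    "\<forall>i<m. (\<Sum>j<m. C$$(i,j) * c$j) = lam * c$i"
    using real_sym_eig[OF Cc m Csym] by blast
  define z where "z i = (if i < k then 0 else c $ (i - k))" for i
  have zsum: "(\<Sum>i<n. g i * z i) = (\<Sum>i<m. g (i+k) * c$i)" for g
    unfolding m_def by (subst sum_shift_zero[of k n]) (use kn in \<open>auto simp: z_def\<close>)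
  have znorm: "(\<Sum>i<n. (z i)^2) = 1"
  proof -
    have "(\<Sum>i<n. (z i)^2) = (\<Sum>i<n. z i * z i)" by (simp add: power2_eq_square)
    also have "\<dots> = (\<Sum>i<m. z (i+k) * c$i)" by (rule zsum)
    also have "\<dots> = 1" using c(2) by (simp add: z_def power2_eq_square)
    finally show ?thesis .
  qed
  have Bz: "(\<Sum>j<n. B i j * z j) = lam * z i" if i: "i < n" for i
  proof (cases "i < k")
    case True
    have "(\<Sum>j<n. B i j * z j) = (\<Sum>j<m. B i (j+k) * c$j)" by (rule zsum)
    also have "\<dots> = 0" using B0 True kn unfolding m_def by (intro sum.neutral) auto
    finally show ?thesis using True by (simp add: z_def)
  next
    case False
    have "(\<Sum>j<n. B i j * z j) = (\<Sum>j<m. B i (j+k) * c$j)" by (rule zsum)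
    also have "\<dots> = (\<Sum>j<m. C$$(i-k,j) * c$j)"
      using False i unfolding C_def m_def by (intro sum.cong refl) auto
    also have "\<dots> = lam * c$(i-k)" using c(3) False i unfolding m_def by auto
    finally show ?thesis using False by (simp add: z_def)
  qed
  define w where "w i = z i - (if i = k then 1 else 0)" for i
  define V where "V = householder n w"
  have Vj: "V l j = (if l = j then 1 else 0)" if "j < k" for l j
  proof -
    have "w j = 0" using that unfolding w_def z_def by auto
    thus ?thesis unfolding V_def householder_def Let_def by auto
  qed
  define s where "s = (\<Sum>l<n. (w l)^2)"
  have s_eq: "s = 2 - 2 * z k"
  proof -
    have "s = (\<Sum>l<n. (z l)^2 - 2 * (z l * (if l = k then 1 else 0)) + (if l = k then 1 else 0))"
      unfolding s_def w_def by (intro sum.cong refl) (auto simp: power2_eq_square algebra_simps)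
    also have "\<dots> = (\<Sum>l<n. (z l)^2) - 2 * (\<Sum>l<n. z l * (if l = k then 1 else 0)) + (\<Sum>l<n. (if l = k then 1 else 0))"
      by (simp add: sum.distrib sum_subtractf sum_distrib_left)
    also have "(\<Sum>l<n. z l * (if l = k then 1 else 0)) = z k" using kron_sum2[OF kn] by simp
    also have "(\<Sum>l<n. (if l = k then 1 else (0::real))) = 1" using kn by simp
    finally show ?thesis using znorm by simp
  qed
  have Vk: "V l k = z l" if l: "l < n" for l
  proof (cases "s = 0")
    case True
    hence "\<forall>l\<in>{..<n}. (w l)^2 = 0" unfolding s_def by (subst sum_nonneg_eq_0_iff[symmetric]) auto
    hence "w l = 0" using l by auto
    hence "z l = (if l = k then 1 else 0)" unfolding w_def by simp
    thus ?thesis unfolding V_def householder_def Let_def s_def[symmetric] using True by simp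
  next
    case False
    have zk: "z k \<noteq> 1" using False s_eq by auto
    have "V l k = (if l = k then 1 else 0) - 2 * w l * w k / s"
      unfolding V_def householder_def Let_def s_def[symmetric] using False by simp
    also have "w k = z k - 1" unfolding w_def by simp
    also have "(if l = k then 1 else 0) - 2 * w l * (z k - 1) / s = (if l = k then 1 else 0) + w l"
      using zk unfolding s_eq by (simp add: field_simps)
    also have "\<dots> = z l" unfolding w_def by simp
    finally show ?thesis .
  qed
  define U' where "U' r j = (\<Sum>l<n. U r l * V l j)" for r j
  have U': "orthm n U'" unfolding U'_def V_def
    using orthm_mult[OF U orthm_householder] by simp
  define \<nu>' where "\<nu>' = \<nu>(k := lam)"
  show ?thesis
  proof (intro exI conjI allI impI)
    show "orthm n U'" by fact
    fix j r assume j: "j < Suc k" and r: "r < n"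
    show "(\<Sum>s<n. a r s * U' s j) = \<nu>' j * U' r j"
    proof (cases "j < k")
      case True
      have U'j: "U' q j = U q j" if "q < n" for q
        unfolding U'_def Vj[OF True] using kron_sum2[of j n "U q"] True kn by simp
      have "(\<Sum>s<n. a r s * U' s j) = (\<Sum>s<n. a r s * U s j)" using U'j by simp
      also have "\<dots> = \<nu> j * U r j" using ev True r by auto
      finally show ?thesis using U'j[OF r] True unfolding \<nu>'_def by simp
    next
      case False
      hence jk: "j = k" using j by simp
      have U'k: "U' q k = (\<Sum>l<n. U q l * z l)" if "q < n" for q
        unfolding U'_def using Vk by simp
      have "(\<Sum>s<n. a r s * U' s j) = (\<Sum>s<n. a r s * (\<Sum>l<n. U s l * z l))"
        unfolding jk using U'k by simp
      also have "\<dots> = (\<Sum>l<n. \<Sum>s<n. a r s * (U s l * z l))" by (rule swap2)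
      also have "\<dots> = (\<Sum>l<n. (\<Sum>s<n. a r s * U s l) * z l)"
        by (simp add: sum_distrib_right sum_distrib_left mult_ac)
      also have "\<dots> = (\<Sum>l<n. (\<Sum>p<n. U r p * B p l) * z l)"
        using UB r by simp
      also have "\<dots> = (\<Sum>p<n. U r p * (\<Sum>l<n. B p l * z l))"
        by (simp add: sum_distrib_right sum_distrib_left mult_ac) (rule sum.swap)
      also have "\<dots> = (\<Sum>p<n. U r p * (lam * z p))" using Bz by simp
      also have "\<dots> = lam * U' r k" using U'k[OF r] by (simp add: sum_distrib_left mult_ac)
      finally show ?thesis unfolding \<nu>'_def jk by simp
    qed
  qed
qed

lemma spectral_fun:
  fixes a :: "nat \<Rightarrow> nat \<Rightarrow> real"
  assumes sym: "\<forall>i<n. \<forall>j<n. a i j = a j i"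
  shows "\<exists>U \<nu>. orthm n U \<and> (\<forall>j<n. \<forall>r<n. (\<Sum>s<n. a r s * U s j) = \<nu> j * U r j)"
proof -
  have "k \<le> n \<Longrightarrow> \<exists>U \<nu>. orthm n U \<and> (\<forall>j<k. \<forall>r<n. (\<Sum>s<n. a r s * U s j) = \<nu> j * U r j)" for k
  proof (induction k)
    case 0
    show ?case using orthm_id by blast
  next
    case (Suc k)
    then obtain U \<nu> where "orthm n U" "\<forall>j<k. \<forall>r<n. (\<Sum>s<n. a r s * U s j) = \<nu> j * U r j" by auto
    from spectral_step[OF sym _ this] Suc(2) show ?case by auto
  qed
  from this[of n] show ?thesis by simp
qed

lemma mult_entry:
  fixes A B :: "'a::comm_ring_1 mat"
  assumes "A \<in> carrier_mat n m" "B \<in> carrier_mat m p" "i < n" "j < p"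
  shows "(A * B) $$ (i,j) = (\<Sum>k<m. A$$(i,k) * B$$(k,j))"
  using assms by (auto simp: scalar_prod_def atLeast0LessThan intro!: sum.cong)

lemma proots_lin_prod: "proots (\<Prod>a\<leftarrow>xs. [:- a, 1:]) = mset (xs :: real list)"
proof (induction xs)
  case Nil thus ?case by simp
next
  case (Cons a xs)
  have nz: "(\<Prod>a\<leftarrow>xs. [:- a, 1:]) \<noteq> (0 :: real poly)"
    by (subst prod_list_zero_iff) auto
  have e: "(\<Prod>a\<leftarrow>a#xs. [:- a, 1:]) = [:- a, 1:] * (\<Prod>a\<leftarrow>xs. [:- a, 1:])"
    by (simp only: list.map prod_list.Cons)
  have "proots (\<Prod>a\<leftarrow>a#xs. [:- a, 1:]) = proots [:- a, 1:] + proots (\<Prod>a\<leftarrow>xs. [:- a, 1:])"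
    unfolding e by (rule proots_mult) (use nz in auto)
  thus ?case using Cons by (simp add: proots_linear_factor)
qed

lemma spectral_jnf:
  fixes L :: "real mat"
  assumes L: "L \<in> carrier_mat n n" and sym: "\<forall>i<n. \<forall>j<n. L$$(i,j) = L$$(j,i)"
  shows "\<exists>U. orthm n U \<and> length (eigs L) = n \<and> sorted (eigs L) \<and>
     (\<forall>j<n. \<forall>r<n. (\<Sum>s<n. L$$(r,s) * U s j) = eigs L ! j * U r j)"
proof -
  obtain U \<nu> where U: "orthm n U" and ev: "\<forall>j<n. \<forall>r<n. (\<Sum>s<n. L$$(r,s) * U s j) = \<nu> j * U r j"
    using spectral_fun[of n "\<lambda>i j. L$$(i,j)"] sym by blast
  define P where "P = mat n n (\<lambda>(i,j). U i j)"
  define Q where "Q = mat n n (\<lambda>(i,j). U j i)"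
  define D where "D = mat n n (\<lambda>(i,j). if i = j then \<nu> i else 0)"
  have Pc: "P \<in> carrier_mat n n" and Qc: "Q \<in> carrier_mat n n" and Dc: "D \<in> carrier_mat n n"
    unfolding P_def Q_def D_def by auto
  have PQ: "P * Q = 1\<^sub>m n"
  proof (rule eq_matI)
    fix i j assume "i < dim_row (1\<^sub>m n)" "j < dim_col (1\<^sub>m n)"
    hence ij: "i < n" "j < n" by auto
    have "(P * Q) $$ (i,j) = (\<Sum>k<n. U i k * U j k)"
      using mult_entry[OF Pc Qc ij] ij unfolding P_def Q_def by simp
    also have "\<dots> = 1\<^sub>m n $$ (i,j)" using U ij unfolding orthm_def by auto
    finally show "(P * Q) $$ (i,j) = 1\<^sub>m n $$ (i,j)" .
  qed (use Pc Qc in auto)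
  have QP: "Q * P = 1\<^sub>m n"
  proof (rule eq_matI)
    fix i j assume "i < dim_row (1\<^sub>m n)" "j < dim_col (1\<^sub>m n)"
    hence ij: "i < n" "j < n" by auto
    have "(Q * P) $$ (i,j) = (\<Sum>k<n. U k i * U k j)"
      using mult_entry[OF Qc Pc ij] ij unfolding P_def Q_def by simp
    also have "\<dots> = 1\<^sub>m n $$ (i,j)" using U ij unfolding orthm_def by auto
    finally show "(Q * P) $$ (i,j) = 1\<^sub>m n $$ (i,j)" .
  qed (use Pc Qc in auto)
  have LPDQ: "L = P * D * Q"
  proof (rule eq_matI)
    fix r t assume "r < dim_row (P * D * Q)" "t < dim_col (P * D * Q)"
    hence rt: "r < n" "t < n" using Pc Qc by auto
    have PD: "(P * D) $$ (r,k) = U r k * \<nu> k" if "k < n" for k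
    proof -
      have "(P * D) $$ (r,k) = (\<Sum>l<n. U r l * (if l = k then \<nu> l else 0))"
        using mult_entry[OF Pc Dc rt(1) that] rt that unfolding P_def D_def by simp
      also have "\<dots> = (\<Sum>l<n. (U r l * \<nu> l) * (if l = k then 1 else 0))"
        by (intro sum.cong refl) auto
      also have "\<dots> = U r k * \<nu> k" using kron_sum2[OF that] by simp
      finally show ?thesis .
    qed
    have "(P * D * Q) $$ (r,t) = (\<Sum>k<n. (P * D) $$ (r,k) * Q $$ (k,t))"
      using mult_entry[OF mult_carrier_mat[OF Pc Dc] Qc rt] .
    also have "\<dots> = (\<Sum>k<n. (\<Sum>s<n. L$$(r,s) * U s k) * U t k)"
      using PD rt ev unfolding Q_def by (intro sum.cong refl) auto
    also have "\<dots> = (\<Sum>s<n. L$$(r,s) * (\<Sum>k<n. U s k * U t k))"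
      by (simp add: sum_distrib_right sum_distrib_left mult_ac) (rule sum.swap)
    also have "\<dots> = (\<Sum>s<n. L$$(r,s) * (if s = t then 1 else 0))"
      using U rt unfolding orthm_def by (intro sum.cong refl) auto
    also have "\<dots> = L $$ (r,t)" using kron_sum2[OF rt(2)] by simp
    finally show "L $$ (r,t) = (P * D * Q) $$ (r,t)" by simp
  qed (use L Pc Qc in auto)
  have "similar_mat_wit L D P Q"
    unfolding similar_mat_wit_def Let_def using L Pc Qc Dc PQ QP LPDQ by auto
  hence sim: "similar_mat L D" unfolding similar_mat_def by blast
  have ut: "upper_triangular D" unfolding D_def upper_triangular_def by auto
  have "diag_mat D = map \<nu> [0..<n]" unfolding diag_mat_def D_def by auto
  hence cp: "char_poly L = (\<Prod>a\<leftarrow>map \<nu> [0..<n]. [:- a, 1:])"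
    using char_poly_similar[OF sim] char_poly_upper_triangular[OF Dc ut] by simp
  define xs where "xs = map \<nu> [0..<n]"
  have eigsL: "eigs L = sort xs"
    unfolding eigs_def cp xs_def[symmetric] proots_lin_prod sorted_list_of_multiset_mset ..
  have "mset (sort xs) = mset xs" by simp
  from permutation_Ex_bij[OF this] obtain f where f: "bij_betw f {..<n} {..<n}"
    "\<forall>i<n. sort xs ! i = xs ! f i" unfolding xs_def by auto
  have fi: "f i < n" if "i < n" for i using f(1) that by (auto dest: bij_betwE)
  have finj: "f i = f j \<longleftrightarrow> i = j" if "i < n" "j < n" for i j
    using f(1) that unfolding bij_betw_def inj_on_def by auto
  define U' where "U' r i = U r (f i)" for r i
  have U': "orthm n U'"
  proof -
    have "(\<Sum>r<n. U' r i * U' r j) = (if i = j then 1 else 0)" if "i < n" "j < n" for i j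
      using U fi[OF that(1)] fi[OF that(2)] finj[OF that] unfolding U'_def orthm_def by auto
    moreover have "(\<Sum>r<n. U' i r * U' j r) = (if i = j then 1 else 0)" if "i < n" "j < n" for i j
    proof -
      have "(\<Sum>r<n. U' i r * U' j r) = (\<Sum>r<n. U i r * U j r)"
        unfolding U'_def using sum.reindex_bij_betw[OF f(1), of "\<lambda>r. U i r * U j r"] by simp
      thus ?thesis using U that unfolding orthm_def by auto
    qed
    ultimately show ?thesis unfolding orthm_def by auto
  qed
  show ?thesis
  proof (intro exI conjI allI impI)
    show "orthm n U'" by fact
    show "length (eigs L) = n" unfolding eigsL xs_def by simp
    show "sorted (eigs L)" unfolding eigsL by simp
    fix j r assume j: "j < n" and r: "r < n"
    have "eigs L ! j = \<nu> (f j)" unfolding eigsL using f(2) j fi[OF j] unfolding xs_def by simp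
    thus "(\<Sum>s<n. L$$(r,s) * U' s j) = eigs L ! j * U' r j"
      unfolding U'_def using ev fi[OF j] r by simp
  qed
qed

definition udu :: "nat \<Rightarrow> (nat \<Rightarrow> nat \<Rightarrow> real) \<Rightarrow> (nat \<Rightarrow> real) \<Rightarrow> real mat" where
  "udu n U f = mat n n (\<lambda>(r,t). \<Sum>k<n. U r k * f k * U t k)"

lemma udu_carrier[simp]: "udu n U f \<in> carrier_mat n n"
  unfolding udu_def by simp

lemma udu_dim[simp]: "dim_row (udu n U f) = n" "dim_col (udu n U f) = n"
  unfolding udu_def by auto

lemma udu_idx: "r < n \<Longrightarrow> t < n \<Longrightarrow> udu n U f $$ (r,t) = (\<Sum>k<n. U r k * f k * U t k)"
  unfolding udu_def by simp

lemma udu_sym: "r < n \<Longrightarrow> t < n \<Longrightarrow> udu n U f $$ (r,t) = udu n U f $$ (t,r)"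
  unfolding udu_def by (simp add: mult_ac)

lemma udu_mult_sum:
  assumes U: "orthm n U" and rt: "r < n" "t < n"
  shows "(\<Sum>l<n. (\<Sum>k<n. U r k * f k * U l k) * (\<Sum>p<n. U l p * g p * U t p))
        = (\<Sum>k<n. U r k * (f k * g k) * U t k)"
proof -
  have "(\<Sum>l<n. (\<Sum>k<n. U r k * f k * U l k) * (\<Sum>p<n. U l p * g p * U t p))
     = (\<Sum>l<n. (\<Sum>k<n. U l k * (U r k * f k)) * (\<Sum>p<n. U l p * (g p * U t p)))"
    by (simp add: mult_ac)
  also have "\<dots> = (\<Sum>k<n. \<Sum>p<n. (U r k * f k) * (g p * U t p) * (\<Sum>l<n. U l k * U l p))"
    by (rule sum_prod_swap)
  also have "\<dots> = (\<Sum>k<n. \<Sum>p<n. (U r k * f k) * (g p * U t p) * (if k = p then 1 else 0))"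
    using U unfolding orthm_def by (intro sum.cong refl) auto
  also have "\<dots> = (\<Sum>k<n. (U r k * f k) * (g k * U t k))"
    by (intro sum.cong refl) (simp add: kron_sum1)
  finally show ?thesis by (simp add: mult_ac)
qed

lemma udu_mult:
  assumes U: "orthm n U"
  shows "udu n U f * udu n U g = udu n U (\<lambda>k. f k * g k)"
proof (rule eq_matI)
  fix r t assume "r < dim_row (udu n U (\<lambda>k. f k * g k))" "t < dim_col (udu n U (\<lambda>k. f k * g k))"
  hence rt: "r < n" "t < n" by auto
  show "(udu n U f * udu n U g) $$ (r,t) = udu n U (\<lambda>k. f k * g k) $$ (r,t)"
    using mult_entry[OF udu_carrier udu_carrier rt] udu_mult_sum[OF U rt] rt
    by (simp add: udu_idx)
qed auto

lemma udu_one: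
  assumes U: "orthm n U"
  shows "udu n U (\<lambda>k. 1) = 1\<^sub>m n"
  by (rule eq_matI) (use U in \<open>auto simp: udu_idx orthm_def\<close>)

lemma udu_add: "udu n U f + udu n U g = udu n U (\<lambda>k. f k + g k)"
  by (rule eq_matI) (auto simp: udu_idx sum.distrib algebra_simps)

lemma udu_smult: "a \<cdot>\<^sub>m udu n U f = udu n U (\<lambda>k. a * f k)"
  by (rule eq_matI) (auto simp: udu_idx sum_distrib_left mult_ac)

lemma udu_minus: "udu n U f - udu n U g = udu n U (\<lambda>k. f k - g k)"
  by (rule eq_matI) (auto simp: udu_idx sum_subtractf algebra_simps)

lemma udu_colnorm:
  assumes U: "orthm n U" and j: "j < n"
  shows "(\<Sum>i<n. (udu n U f $$ (i,j))^2) = (\<Sum>k<n. (U j k)^2 * (f k)^2)"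
proof -
  have "(\<Sum>i<n. (udu n U f $$ (i,j))^2) = (\<Sum>i<n. (\<Sum>k<n. U j k * f k * U i k) * (\<Sum>p<n. U i p * f p * U j p))"
    using j by (intro sum.cong refl) (simp add: udu_idx power2_eq_square mult_ac)
  also have "\<dots> = (\<Sum>k<n. U j k * (f k * f k) * U j k)" by (rule udu_mult_sum[OF U j j])
  finally show ?thesis by (simp add: power2_eq_square mult_ac)
qed

lemma L_udu:
  fixes L :: "real mat"
  assumes L: "L \<in> carrier_mat n n" and U: "orthm n U"
    and ev: "\<forall>j<n. \<forall>r<n. (\<Sum>s<n. L$$(r,s) * U s j) = \<nu> j * U r j"
  shows "L = udu n U \<nu>"
proof (rule eq_matI)
  fix r t assume "r < dim_row (udu n U \<nu>)" "t < dim_col (udu n U \<nu>)"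
  hence rt: "r < n" "t < n" by auto
  have "(\<Sum>k<n. U r k * \<nu> k * U t k) = (\<Sum>k<n. (\<Sum>s<n. L$$(r,s) * U s k) * U t k)"
    using ev rt by (intro sum.cong refl) auto
  also have "\<dots> = (\<Sum>s<n. L$$(r,s) * (\<Sum>k<n. U s k * U t k))"
    by (simp add: sum_distrib_right sum_distrib_left mult_ac) (rule sum.swap)
  also have "\<dots> = (\<Sum>s<n. L$$(r,s) * (if s = t then 1 else 0))"
    using U rt unfolding orthm_def by (intro sum.cong refl) auto
  also have "\<dots> = L $$ (r,t)" using kron_sum2[OF rt(2)] by simp
  finally show "L $$ (r,t) = udu n U \<nu> $$ (r,t)" using rt by (simp add: udu_idx)
qed (use L in auto)

lemma lap_carrier[simp]: "laplacian n W \<in> carrier_mat n n"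
  unfolding laplacian_def by simp

lemma lap_idx: "i < n \<Longrightarrow> j < n \<Longrightarrow>
   laplacian n W $$ (i,j) = (if i = j then (\<Sum>k<n. W $$ (i,k)) else 0) - W $$ (i,j)"
  unfolding laplacian_def by simp

lemma lap_sym:
  assumes "\<forall>i<n. \<forall>j<n. W $$ (i, j) = W $$ (j, i)"
  shows "\<forall>i<n. \<forall>j<n. laplacian n W $$ (i,j) = laplacian n W $$ (j,i)"
  using assms by (auto simp: lap_idx)

lemma lap_mulvec:
  assumes r: "r < n"
  shows "(\<Sum>s<n. laplacian n W $$ (r,s) * x s) = (\<Sum>s<n. W$$(r,s)) * x r - (\<Sum>s<n. W$$(r,s) * x s)"
proof -
  have "(\<Sum>s<n. laplacian n W $$ (r,s) * x s)
      = (\<Sum>s<n. ((\<Sum>k<n. W$$(r,k)) * x s) * (if r = s then 1 else 0)) - (\<Sum>s<n. W$$(r,s) * x s)"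
  proof -
    have "(\<Sum>s<n. laplacian n W $$ (r,s) * x s) = (\<Sum>s<n. ((\<Sum>k<n. W$$(r,k)) * x s) * (if r = s then 1 else 0) - W$$(r,s) * x s)"
      by (intro sum.cong refl) (auto simp: lap_idx r algebra_simps)
    thus ?thesis by (simp add: sum_subtractf)
  qed
  also have "(\<Sum>s<n. ((\<Sum>k<n. W$$(r,k)) * x s) * (if r = s then 1 else 0)) = (\<Sum>s<n. W$$(r,s)) * x r"
    using kron_sum1[OF r] by simp
  finally show ?thesis .
qed

lemma lap_colsum:
  assumes sym: "\<forall>i<n. \<forall>j<n. W $$ (i, j) = W $$ (j, i)" and s: "s < n"
  shows "(\<Sum>r<n. laplacian n W $$ (r,s)) = 0"
proof -
  have "(\<Sum>r<n. laplacian n W $$ (r,s)) = (\<Sum>r<n. laplacian n W $$ (s,r) * 1)"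
    using lap_sym[OF sym] s by simp
  also have "\<dots> = 0" using lap_mulvec[OF s, of W "\<lambda>_. 1"] by simp
  finally show ?thesis .
qed

lemma lap_psd:
  assumes sym: "\<forall>i<n. \<forall>j<n. W $$ (i, j) = W $$ (j, i)"
    and nn: "\<forall>i<n. \<forall>j<n. W $$ (i, j) \<ge> 0"
  shows "(\<Sum>r<n. x r * (\<Sum>s<n. laplacian n W $$ (r,s) * x s)) \<ge> 0"
proof -
  define d where "d r = (\<Sum>s<n. W$$(r,s))" for r
  have q: "(\<Sum>r<n. x r * (\<Sum>s<n. laplacian n W $$ (r,s) * x s))
       = (\<Sum>r<n. d r * (x r)^2) - (\<Sum>r<n. \<Sum>s<n. W$$(r,s) * x r * x s)"
  proof -
    have "(\<Sum>r<n. x r * (\<Sum>s<n. laplacian n W $$ (r,s) * x s))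
        = (\<Sum>r<n. x r * (d r * x r - (\<Sum>s<n. W$$(r,s) * x s)))"
      unfolding d_def by (intro sum.cong refl) (simp add: lap_mulvec)
    thus ?thesis by (simp add: sum_subtractf algebra_simps power2_eq_square sum_distrib_left)
  qed
  have e1: "(\<Sum>r<n. \<Sum>s<n. W$$(r,s) * (x r)^2) = (\<Sum>r<n. d r * (x r)^2)"
    unfolding d_def by (simp add: sum_distrib_right)
  have e2: "(\<Sum>r<n. \<Sum>s<n. W$$(r,s) * (x s)^2) = (\<Sum>r<n. d r * (x r)^2)"
  proof -
    have "(\<Sum>r<n. \<Sum>s<n. W$$(r,s) * (x s)^2) = (\<Sum>s<n. \<Sum>r<n. W$$(r,s) * (x s)^2)" by (rule sum.swap)
    also have "\<dots> = (\<Sum>s<n. \<Sum>r<n. W$$(s,r) * (x s)^2)" using sym by (intro sum.cong refl) auto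
    finally show ?thesis using e1 by simp
  qed
  have "0 \<le> (\<Sum>r<n. \<Sum>s<n. W$$(r,s) * (x r - x s)^2)"
    using nn by (intro sum_nonneg) auto
  also have "(\<Sum>r<n. \<Sum>s<n. W$$(r,s) * (x r - x s)^2)
    = (\<Sum>r<n. \<Sum>s<n. W$$(r,s) * (x r)^2) + (\<Sum>r<n. \<Sum>s<n. W$$(r,s) * (x s)^2)
      - 2 * (\<Sum>r<n. \<Sum>s<n. W$$(r,s) * x r * x s)"
    by (simp add: power2_diff algebra_simps sum.distrib sum_subtractf sum_distrib_left)
  finally show ?thesis unfolding q e1 e2 by simp
qed

lemma udu_cong: "(\<And>k. k < n \<Longrightarrow> f k = g k) \<Longrightarrow> udu n U f = udu n U g"
  unfolding udu_def by (intro cong_mat refl) (auto intro!: sum.cong)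

lemma smoothing_matrix_facts:
  assumes graph: "weighted_connected_graph n W" and \<alpha>: "\<alpha> > 0" and n: "n \<ge> 2"
  defines "L \<equiv> laplacian n W"
  defines "H \<equiv> the (mat_inverse (1\<^sub>m n + \<alpha> \<cdot>\<^sub>m L))"
  shows "H \<in> carrier_mat n n" "\<forall>i<n. (\<Sum>j<n. H$$(i,j)) = 1"
    "\<forall>j<n. (\<Sum>i<n. (H$$(i,j) - (if i = j then 1 else 0))^2)
         \<le> (1 / (1 + 1 / (\<alpha> * eigs L ! (n-1))))^2 * (1 - 1 / real n)"
    "\<forall>j<n. (\<Sum>i<n. (H$$(i,j))^2) \<le> 1 / real n + (1 / (1 + \<alpha> * eigs L ! 1))^2 * (1 - 1 / real n)"
    "0 \<le> eigs L ! 1"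
proof -
  have Wc: "W \<in> carrier_mat n n" and Wsym: "\<forall>i<n. \<forall>j<n. W $$ (i, j) = W $$ (j, i)"
    and Wnn: "\<forall>i<n. \<forall>j<n. W $$ (i, j) \<ge> 0"
    using graph unfolding weighted_connected_graph_def by auto
  have Lc: "L \<in> carrier_mat n n" unfolding L_def by simp
  obtain U where U: "orthm n U" and len: "length (eigs L) = n" and srt: "sorted (eigs L)"
    and ev: "\<forall>j<n. \<forall>r<n. (\<Sum>s<n. L$$(r,s) * U s j) = eigs L ! j * U r j"
    using spectral_jnf[OF Lc] lap_sym[OF Wsym] unfolding L_def by blast
  define \<nu> where "\<nu> k = eigs L ! k" for k
  have Ludu: "L = udu n U \<nu>" using L_udu[OF Lc U] ev unfolding \<nu>_def by blast
  have rown: "(\<Sum>k<n. (U j k)^2) = 1" if "j < n" for j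
    using U that unfolding orthm_def by (simp add: power2_eq_square)
  have coln: "(\<Sum>r<n. (U r k)^2) = 1" if "k < n" for k
    using U that unfolding orthm_def by (simp add: power2_eq_square)
  have nu_nn: "\<nu> k \<ge> 0" if k: "k < n" for k
  proof -
    have "\<nu> k = (\<Sum>r<n. U r k * (\<nu> k * U r k))"
      using coln[OF k] by (simp add: sum_distrib_left[symmetric] power2_eq_square mult_ac sum_distrib_right[symmetric])
    also have "\<dots> = (\<Sum>r<n. U r k * (\<Sum>s<n. L$$(r,s) * U s k))"
      using ev k unfolding \<nu>_def by (intro sum.cong refl) auto
    also have "\<dots> \<ge> 0" using lap_psd[OF Wsym Wnn, of "\<lambda>r. U r k"] unfolding L_def .
    finally show ?thesis .
  qed
  show "0 \<le> eigs L ! 1" using nu_nn[of 1] n unfolding \<nu>_def by simp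
  have nu_le: "\<nu> k \<le> \<nu> (n-1)" if "k < n" for k
    unfolding \<nu>_def using sorted_nth_mono[OF srt, of k "n-1"] that len by auto
  have nu_ge1: "\<nu> 1 \<le> \<nu> k" if "1 \<le> k" "k < n" for k
    unfolding \<nu>_def using sorted_nth_mono[OF srt, of 1 k] that len by auto
  define a where "a k = (\<Sum>j<n. U j k)" for k
  have A1: "\<nu> k * a k = 0" if k: "k < n" for k
  proof -
    have "\<nu> k * a k = (\<Sum>r<n. \<nu> k * U r k)" unfolding a_def by (simp add: sum_distrib_left)
    also have "\<dots> = (\<Sum>r<n. \<Sum>s<n. L$$(r,s) * U s k)" using ev k unfolding \<nu>_def
      by (intro sum.cong refl) (auto simp: mult.commute)
    also have "\<dots> = (\<Sum>s<n. \<Sum>r<n. L$$(r,s) * U s k)" by (rule sum.swap)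
    also have "\<dots> = (\<Sum>s<n. (\<Sum>r<n. L$$(r,s)) * U s k)" by (simp add: sum_distrib_right)
    also have "\<dots> = 0" using lap_colsum[OF Wsym] unfolding L_def by simp
    finally show ?thesis .
  qed
  have A2: "(\<Sum>k<n. U j k * a k) = 1" if j: "j < n" for j
  proof -
    have "(\<Sum>k<n. U j k * a k) = (\<Sum>k<n. \<Sum>i<n. U j k * U i k)" unfolding a_def by (simp add: sum_distrib_left)
    also have "\<dots> = (\<Sum>i<n. \<Sum>k<n. U j k * U i k)" by (rule sum.swap)
    also have "\<dots> = (\<Sum>i<n. 1 * (if j = i then 1 else 0))" using U j unfolding orthm_def by (intro sum.cong refl) auto
    also have "\<dots> = 1" using kron_sum1[OF j, of "\<lambda>_. 1"] by simp
    finally show ?thesis .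
  qed
  have A3: "(\<Sum>k<n. (a k)^2) = real n"
  proof -
    have "(\<Sum>k<n. (a k)^2) = (\<Sum>k<n. (\<Sum>i<n. U i k * 1) * (\<Sum>p<n. U p k * 1))"
      unfolding a_def by (simp add: power2_eq_square)
    also have "\<dots> = (\<Sum>i<n. \<Sum>p<n. 1 * 1 * (\<Sum>k<n. U i k * U p k))"
      by (rule sum_prod_swap)
    also have "\<dots> = (\<Sum>i<n. \<Sum>p<n. (if i = p then 1 else 0))"
      using U unfolding orthm_def by (intro sum.cong refl) auto
    also have "\<dots> = real n" by simp
    finally show ?thesis .
  qed
  define hh where "hh k = 1 / (1 + \<alpha> * \<nu> k)" for k
  have pos: "1 + \<alpha> * \<nu> k > 0" if "k < n" for k using nu_nn[OF that] \<alpha> by (simp add: add_pos_nonneg)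
  have Mudu: "1\<^sub>m n + \<alpha> \<cdot>\<^sub>m L = udu n U (\<lambda>k. 1 + \<alpha> * \<nu> k)"
    unfolding Ludu udu_one[OF U, symmetric] udu_smult udu_add ..
  define G where "G = udu n U hh"
  have GM: "G * (1\<^sub>m n + \<alpha> \<cdot>\<^sub>m L) = 1\<^sub>m n"
  proof -
    have "G * (1\<^sub>m n + \<alpha> \<cdot>\<^sub>m L) = udu n U (\<lambda>k. hh k * (1 + \<alpha> * \<nu> k))"
      unfolding G_def Mudu udu_mult[OF U] ..
    also have "\<dots> = udu n U (\<lambda>k. 1)"
    proof (rule udu_cong)
      fix k assume "k < n" with pos[of k] show "hh k * (1 + \<alpha> * \<nu> k) = 1" by (simp add: hh_def)
    qed
    finally show ?thesis using udu_one[OF U] by simp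
  qed
  have MG: "(1\<^sub>m n + \<alpha> \<cdot>\<^sub>m L) * G = 1\<^sub>m n"
  proof -
    have "(1\<^sub>m n + \<alpha> \<cdot>\<^sub>m L) * G = udu n U (\<lambda>k. (1 + \<alpha> * \<nu> k) * hh k)"
      unfolding G_def Mudu udu_mult[OF U] ..
    also have "\<dots> = udu n U (\<lambda>k. 1)"
    proof (rule udu_cong)
      fix k assume "k < n" with pos[of k] show "(1 + \<alpha> * \<nu> k) * hh k = 1" by (simp add: hh_def)
    qed
    finally show ?thesis using udu_one[OF U] by simp
  qed
  have Mc: "1\<^sub>m n + \<alpha> \<cdot>\<^sub>m L \<in> carrier_mat n n" using Lc by simp
  have Gc: "G \<in> carrier_mat n n" unfolding G_def by simp
  have "1\<^sub>m n + \<alpha> \<cdot>\<^sub>m L \<in> Units (ring_mat TYPE(real) n ())"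
    unfolding Units_def ring_mat_def using Mc Gc GM MG by auto
  hence "mat_inverse (1\<^sub>m n + \<alpha> \<cdot>\<^sub>m L) \<noteq> None" using mat_inverse(1)[OF Mc, where b="()"] by blast
  then obtain H' where H': "mat_inverse (1\<^sub>m n + \<alpha> \<cdot>\<^sub>m L) = Some H'" by blast
  from mat_inverse(2)[OF Mc H'] have H'p: "(1\<^sub>m n + \<alpha> \<cdot>\<^sub>m L) * H' = 1\<^sub>m n" "H' \<in> carrier_mat n n" by auto
  have HG: "H = G"
  proof -
    have "G = G * ((1\<^sub>m n + \<alpha> \<cdot>\<^sub>m L) * H')" using H'p Gc by simp
    also have "\<dots> = (G * (1\<^sub>m n + \<alpha> \<cdot>\<^sub>m L)) * H'" using Gc Mc H'p by (simp add: assoc_mult_mat)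
    also have "\<dots> = H'" using GM H'p by simp
    finally show ?thesis unfolding H_def H' by simp
  qed
  show "H \<in> carrier_mat n n" unfolding HG by fact
  have hha: "hh k * a k = a k" if "k < n" for k
  proof (cases "a k = 0")
    case False
    hence "\<nu> k = 0" using A1[OF that] by simp
    thus ?thesis unfolding hh_def by simp
  qed simp
  show "\<forall>i<n. (\<Sum>j<n. H$$(i,j)) = 1"
  proof (intro allI impI)
    fix i assume i: "i < n"
    have "(\<Sum>j<n. H$$(i,j)) = (\<Sum>j<n. \<Sum>k<n. U i k * hh k * U j k)"
      unfolding HG G_def using i by (intro sum.cong refl) (simp add: udu_idx)
    also have "\<dots> = (\<Sum>k<n. \<Sum>j<n. U i k * hh k * U j k)" by (rule sum.swap)
    also have "\<dots> = (\<Sum>k<n. U i k * (hh k * a k))" unfolding a_def by (simp add: sum_distrib_left mult_ac)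
    also have "\<dots> = (\<Sum>k<n. U i k * a k)" using hha by (intro sum.cong refl) auto
    also have "\<dots> = 1" by (rule A2[OF i])
    finally show "(\<Sum>j<n. H$$(i,j)) = 1" .
  qed
  define Cn where "Cn = 1 / (1 + 1 / (\<alpha> * \<nu> (n-1)))"
  have n0: "n > 0" using n by simp
  show "\<forall>j<n. (\<Sum>i<n. (H$$(i,j) - (if i = j then 1 else 0))^2)
         \<le> (1 / (1 + 1 / (\<alpha> * eigs L ! (n-1))))^2 * (1 - 1 / real n)"
  proof (intro allI impI)
    fix j assume j: "j < n"
    define z where "z k = (if \<nu> k = 0 then 1 else (0::real))" for k
    have "(\<Sum>i<n. (H$$(i,j) - (if i = j then 1 else 0))^2) = (\<Sum>i<n. (udu n U (\<lambda>k. hh k - 1) $$ (i,j))^2)"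
      unfolding HG G_def udu_minus[symmetric] udu_one[OF U, symmetric] using j
      by (intro sum.cong refl) (simp add: udu_one[OF U])
    also have "\<dots> = (\<Sum>k<n. (U j k)^2 * (hh k - 1)^2)" by (rule udu_colnorm[OF U j])
    also have "\<dots> \<le> (\<Sum>k<n. (U j k)^2 * ((1 - z k) * Cn^2))"
    proof (rule sum_mono)
      fix k assume k: "k \<in> {..<n}"
      have "(hh k - 1)^2 \<le> (1 - z k) * Cn^2"
      proof (cases "\<nu> k = 0")
        case True thus ?thesis unfolding hh_def z_def by simp
      next
        case False
        hence nk: "\<nu> k > 0" using nu_nn k by force
        have nn: "\<nu> (n-1) > 0" using nu_le[of k] nk k by force
        have "hh k - 1 = - (\<alpha> * \<nu> k / (1 + \<alpha> * \<nu> k))" unfolding hh_def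
          using pos[of k] k by (simp add: field_simps)
        hence "(hh k - 1)^2 = (\<alpha> * \<nu> k / (1 + \<alpha> * \<nu> k))^2" by simp
        also have "\<alpha> * \<nu> k / (1 + \<alpha> * \<nu> k) \<le> Cn"
        proof -
          have "\<alpha> * \<nu> k \<le> \<alpha> * \<nu> (n-1)" using nu_le[of k] k \<alpha> by simp
          hence "\<alpha> * \<nu> k * (1 + \<alpha> * \<nu> (n-1)) \<le> \<alpha> * \<nu> (n-1) * (1 + \<alpha> * \<nu> k)"
            by (simp add: algebra_simps)
          hence "\<alpha> * \<nu> k / (1 + \<alpha> * \<nu> k) \<le> \<alpha> * \<nu> (n-1) / (1 + \<alpha> * \<nu> (n-1))"
            using pos[of k] k \<alpha> nn by (simp add: divide_simps add_pos_pos)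
          also have "\<dots> = Cn" unfolding Cn_def using \<alpha> nn by (simp add: field_simps)
          finally show ?thesis .
        qed
        hence "(\<alpha> * \<nu> k / (1 + \<alpha> * \<nu> k))^2 \<le> Cn^2"
          using nk \<alpha> pos[of k] k by (intro power_mono) auto
        finally show ?thesis unfolding z_def using False by simp
      qed
      thus "(U j k)^2 * (hh k - 1)^2 \<le> (U j k)^2 * ((1 - z k) * Cn^2)"
        by (intro mult_left_mono) auto
    qed
    also have "\<dots> = Cn^2 * (\<Sum>k<n. (U j k)^2) - Cn^2 * (\<Sum>k<n. z k * (U j k)^2)"
      by (simp add: algebra_simps sum_subtractf sum_distrib_left)
    also have "\<dots> = Cn^2 * (1 - (\<Sum>k<n. z k * (U j k)^2))"
      using rown[OF j] by (simp add: algebra_simps)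
    also have "\<dots> \<le> Cn^2 * (1 - 1 / real n)"
    proof (rule mult_left_mono)
      have za: "z k * a k = a k" if "k < n" for k
        using A1[OF that] unfolding z_def by auto
      have "0 \<le> (\<Sum>k<n. z k * (U j k - a k / n)^2)"
        unfolding z_def by (intro sum_nonneg) auto
      also have "\<dots> = (\<Sum>k<n. z k * (U j k)^2) - 2 / n * (\<Sum>k<n. U j k * (z k * a k))
           + 1 / n^2 * (\<Sum>k<n. z k * (a k)^2)"
        by (simp add: power2_diff algebra_simps sum.distrib sum_subtractf sum_distrib_left
            sum_divide_distrib power_divide)
      also have "(\<Sum>k<n. U j k * (z k * a k)) = (\<Sum>k<n. U j k * a k)"
        using za by (intro sum.cong refl) auto
      also have "\<dots> = 1" using A2[OF j] .
      also have "(\<Sum>k<n. z k * (a k)^2) = (\<Sum>k<n. (a k)^2)"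
        using za by (intro sum.cong refl) (auto simp: power2_eq_square mult.assoc[symmetric])
      also have "\<dots> = real n" using A3 .
      finally have "1 / real n \<le> (\<Sum>k<n. z k * (U j k)^2)" using n0 by (simp add: power2_eq_square field_simps)
      thus "1 - (\<Sum>k<n. z k * (U j k)^2) \<le> 1 - 1 / real n" by simp
    qed simp
    finally show "(\<Sum>i<n. (H$$(i,j) - (if i = j then 1 else 0))^2)
         \<le> (1 / (1 + 1 / (\<alpha> * eigs L ! (n-1))))^2 * (1 - 1 / real n)"
      unfolding Cn_def \<nu>_def by simp
  qed
  define d where "d = 1 / (1 + \<alpha> * \<nu> 1)"
  have hh_le1: "hh k \<le> 1" "hh k \<ge> 0" if "k < n" for k
    unfolding hh_def using pos[OF that] nu_nn[OF that] \<alpha> by (auto simp: field_simps)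
  show "\<forall>j<n. (\<Sum>i<n. (H$$(i,j))^2) \<le> 1 / real n + (1 / (1 + \<alpha> * eigs L ! 1))^2 * (1 - 1 / real n)"
  proof (intro allI impI)
    fix j assume j: "j < n"
    have "(\<Sum>i<n. (H$$(i,j))^2) = (\<Sum>k<n. (U j k)^2 * (hh k)^2)"
      unfolding HG G_def by (rule udu_colnorm[OF U j])
    also have "\<dots> \<le> 1 / real n + d^2 * (1 - 1 / real n)"
    proof (cases "\<nu> 1 = 0")
      case True
      hence d1: "d = 1" unfolding d_def by simp
      have "(\<Sum>k<n. (U j k)^2 * (hh k)^2) \<le> (\<Sum>k<n. (U j k)^2 * 1)"
        using hh_le1 by (intro sum_mono mult_left_mono) (auto simp: power_le_one)
      also have "\<dots> = 1" using rown[OF j] by simp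
      finally show ?thesis unfolding d1 by simp
    next
      case False
      have n1: "1 < n" using n by simp
      hence nu1: "\<nu> 1 > 0" using nu_nn[of 1] False by simp
      have ak: "a k = 0" if "1 \<le> k" "k < n" for k
        using A1[OF that(2)] nu_ge1[OF that] nu1 by auto
      have "(\<Sum>k<n. U j k * a k) = U j 0 * a 0"
        using ak by (subst sum.remove[of _ 0]) (use n0 in \<open>auto intro!: sum.neutral\<close>)
      hence e1: "U j 0 * a 0 = 1" using A2[OF j] by simp
      have "(\<Sum>k<n. (a k)^2) = (a 0)^2"
        using ak by (subst sum.remove[of _ 0]) (use n0 in \<open>auto intro!: sum.neutral\<close>)
      hence e2: "(a 0)^2 = real n" using A3 by simp
      have Uj0: "(U j 0)^2 = 1 / real n"
      proof -
        have "(U j 0)^2 * (a 0)^2 = 1" using e1 by (metis power_mult_distrib power_one)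
        thus ?thesis using e2 n0 by (simp add: field_simps)
      qed
      have dpos: "0 \<le> d" unfolding d_def using pos[of 1] n1 by simp
      have hk: "hh k \<le> d" if "1 \<le> k" "k < n" for k
        unfolding hh_def d_def using nu_ge1[OF that] pos[of 1] pos[OF that(2)] n1 \<alpha>
        by (simp add: frac_le)
      have "(\<Sum>k<n. (U j k)^2 * (hh k)^2) \<le> (\<Sum>k<n. (U j k)^2 * (d^2 + (if k = 0 then 1 - d^2 else 0)))"
      proof (rule sum_mono)
        fix k assume k: "k \<in> {..<n}"
        have "(hh k)^2 \<le> d^2 + (if k = 0 then 1 - d^2 else 0)"
        proof (cases "k = 0")
          case True thus ?thesis using hh_le1[of k] k by (simp add: power_le_one)
        next
          case False thus ?thesis using hk[of k] k hh_le1[of k] by (simp add: power_mono)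
        qed
        thus "(U j k)^2 * (hh k)^2 \<le> (U j k)^2 * (d^2 + (if k = 0 then 1 - d^2 else 0))"
          by (intro mult_left_mono) auto
      qed
      also have "\<dots> = d^2 * (\<Sum>k<n. (U j k)^2) + (\<Sum>k<n. (U j k)^2 * (if k = 0 then 1 - d^2 else 0))"
        by (simp add: algebra_simps sum.distrib sum_distrib_left)
      also have "(\<Sum>k<n. (U j k)^2 * (if k = 0 then 1 - d^2 else 0)) = (U j 0)^2 * (1 - d^2)"
        using kron_sum2[OF n0, of "\<lambda>k. (U j k)^2 * (1 - d^2)"] by (simp add: if_distrib cong: if_cong)
      finally show ?thesis using rown[OF j] Uj0 by (simp add: algebra_simps)
    qed
    finally show "(\<Sum>i<n. (H$$(i,j))^2) \<le> 1 / real n + (1 / (1 + \<alpha> * eigs L ! 1))^2 * (1 - 1 / real n)"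
      unfolding d_def \<nu>_def by simp
  qed
qed

lemma distr_lborel_borel: "distr M lborel f = distr M borel f"
  unfolding distr_def by (simp add: sets_lborel space_lborel)

lemma gauss_moments:
  fixes X :: "'w \<Rightarrow> real"
  assumes P: "prob_space M" and Xm: "X \<in> borel_measurable M"
    and D: "distr M borel X = gaussian \<mu> s" and s: "s \<ge> 0"
  shows "integrable M (\<lambda>\<omega>. X \<omega> - \<mu>)" "integral\<^sup>L M (\<lambda>\<omega>. X \<omega> - \<mu>) = 0"
    "integrable M (\<lambda>\<omega>. (X \<omega> - \<mu>)^2)" "integral\<^sup>L M (\<lambda>\<omega>. (X \<omega> - \<mu>)^2) = s^2"
proof -
  have "integrable M (\<lambda>\<omega>. (X \<omega> - \<mu>)^k) \<and> integral\<^sup>L M (\<lambda>\<omega>. (X \<omega> - \<mu>)^k) = (if k = 1 then 0 else s^2)"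
    if k: "k = 1 \<or> k = 2" for k
  proof (cases "s = 0")
    case True
    have "AE x in distr M borel X. x = \<mu>"
      unfolding D gaussian_def using True by (simp add: AE_return)
    hence ae: "AE \<omega> in M. X \<omega> = \<mu>" using AE_distrD[OF Xm] by blast
    have ae2: "AE \<omega> in M. (X \<omega> - \<mu>)^k = 0" using ae by eventually_elim (use k in auto)
    have "integrable M (\<lambda>\<omega>. (X \<omega> - \<mu>)^k) = integrable M (\<lambda>\<omega>. 0::real)"
      by (rule integrable_cong_AE) (use Xm ae2 in auto)
    moreover have "integral\<^sup>L M (\<lambda>\<omega>. (X \<omega> - \<mu>)^k) = integral\<^sup>L M (\<lambda>\<omega>. 0::real)"
      by (rule integral_cong_AE) (use Xm ae2 in auto)
    ultimately show ?thesis using True by simp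
  next
    case False
    hence sp: "s > 0" using s by simp
    have dist: "distributed M lborel X (\<lambda>x. ennreal (normal_density \<mu> s x))"
      unfolding distributed_def distr_lborel_borel D gaussian_def using False Xm
      by (simp add: measurable_lborel1)
    have int: "integrable M (\<lambda>\<omega>. (X \<omega> - \<mu>)^k)"
      using distributed_integrable[OF dist, of "\<lambda>x. (x - \<mu>)^k"] integrable_normal_moment[OF sp, of \<mu> k]
      by simp
    have ie: "integral\<^sup>L M (\<lambda>\<omega>. (X \<omega> - \<mu>)^k) = integral\<^sup>L lborel (\<lambda>x. normal_density \<mu> s x * (x - \<mu>)^k)"
      using distributed_integral[OF dist, of "\<lambda>x. (x - \<mu>)^k"] by simp
    show ?thesis
    proof (cases "k = 1")
      case True
      thus ?thesis using int ie integral_normal_moment_odd[OF sp, of \<mu> 0] by simp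
    next
      case False
      hence k2: "k = 2" using k by simp
      thus ?thesis using int ie integral_normal_moment_even[OF sp, of \<mu> 1] sp by simp
    qed
  qed
  from this[of 1] this[of 2] show
    "integrable M (\<lambda>\<omega>. X \<omega> - \<mu>)" "integral\<^sup>L M (\<lambda>\<omega>. X \<omega> - \<mu>) = 0"
    "integrable M (\<lambda>\<omega>. (X \<omega> - \<mu>)^2)" "integral\<^sup>L M (\<lambda>\<omega>. (X \<omega> - \<mu>)^2) = s^2" by auto
qed

lemma sq_int_prod:
  fixes f g :: "'w \<Rightarrow> real"
  assumes "f \<in> borel_measurable M" "g \<in> borel_measurable M"
    "integrable M (\<lambda>\<omega>. (f \<omega>)^2)" "integrable M (\<lambda>\<omega>. (g \<omega>)^2)"
  shows "integrable M (\<lambda>\<omega>. f \<omega> * g \<omega>)"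
proof (rule Bochner_Integration.integrable_bound)
  show "integrable M (\<lambda>\<omega>. (f \<omega>)^2 + (g \<omega>)^2)" using assms by auto
  show "(\<lambda>\<omega>. f \<omega> * g \<omega>) \<in> borel_measurable M" using assms by auto
  show "AE \<omega> in M. norm (f \<omega> * g \<omega>) \<le> norm ((f \<omega>)^2 + (g \<omega>)^2)"
  proof (rule AE_I2)
    fix \<omega>
    have "0 \<le> (\<bar>f \<omega>\<bar> - \<bar>g \<omega>\<bar>)^2" by simp
    hence "2 * \<bar>f \<omega> * g \<omega>\<bar> \<le> (f \<omega>)^2 + (g \<omega>)^2"
      by (simp add: power2_diff abs_mult power2_abs)
    thus "norm (f \<omega> * g \<omega>) \<le> norm ((f \<omega>)^2 + (g \<omega>)^2)" by simp
  qed
qed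

lemma sq_expand:
  fixes a b x y :: "nat \<Rightarrow> real"
  shows "((\<Sum>j<n. a j * x j) + (\<Sum>j<n. b j * y j))^2 =
    (\<Sum>j<n. \<Sum>k<n. a j * a k * (x j * x k) + 2 * a j * b k * (x j * y k) + b j * b k * (y j * y k))"
proof -
  have "((\<Sum>j<n. a j * x j) + (\<Sum>j<n. b j * y j))^2 =
     (\<Sum>j<n. a j * x j) * (\<Sum>k<n. a k * x k) + 2 * ((\<Sum>j<n. a j * x j) * (\<Sum>k<n. b k * y k))
     + (\<Sum>j<n. b j * y j) * (\<Sum>k<n. b k * y k)"
    by (simp add: power2_eq_square algebra_simps)
  also have "\<dots> = (\<Sum>j<n. \<Sum>k<n. a j * x j * (a k * x k)) + 2 * (\<Sum>j<n. \<Sum>k<n. a j * x j * (b k * y k))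
     + (\<Sum>j<n. \<Sum>k<n. b j * y j * (b k * y k))"
    by (simp add: sum_product)
  also have "\<dots> = (\<Sum>j<n. \<Sum>k<n. a j * a k * (x j * x k) + 2 * a j * b k * (x j * y k) + b j * b k * (y j * y k))"
    by (simp add: sum.distrib sum_distrib_left mult_ac)
  finally show ?thesis .
qed

lemma integral_sum3:
  fixes T :: "nat \<Rightarrow> nat \<Rightarrow> nat \<Rightarrow> 'w \<Rightarrow> real"
  assumes "\<And>i j k. i < n \<Longrightarrow> j < n \<Longrightarrow> k < n \<Longrightarrow> integrable M (T i j k)"
  shows "integral\<^sup>L M (\<lambda>\<omega>. \<Sum>i<n. \<Sum>j<n. \<Sum>k<n. T i j k \<omega>) = (\<Sum>i<n. \<Sum>j<n. \<Sum>k<n. integral\<^sup>L M (T i j k))"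
proof -
  have i2: "integrable M (\<lambda>\<omega>. \<Sum>k<n. T i j k \<omega>)" if "i < n" "j < n" for i j
    using assms that by (intro Bochner_Integration.integrable_sum) auto
  have i1: "integrable M (\<lambda>\<omega>. \<Sum>j<n. \<Sum>k<n. T i j k \<omega>)" if "i < n" for i
    by (rule Bochner_Integration.integrable_sum) (use i2 that in auto)
  have "integral\<^sup>L M (\<lambda>\<omega>. \<Sum>i<n. \<Sum>j<n. \<Sum>k<n. T i j k \<omega>) = (\<Sum>i<n. integral\<^sup>L M (\<lambda>\<omega>. \<Sum>j<n. \<Sum>k<n. T i j k \<omega>))"
    using i1 by (intro Bochner_Integration.integral_sum) auto
  also have "\<dots> = (\<Sum>i<n. \<Sum>j<n. integral\<^sup>L M (\<lambda>\<omega>. \<Sum>k<n. T i j k \<omega>))"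
    using i2 by (intro sum.cong refl Bochner_Integration.integral_sum) auto
  also have "\<dots> = (\<Sum>i<n. \<Sum>j<n. \<Sum>k<n. integral\<^sup>L M (T i j k))"
    using assms by (intro sum.cong refl Bochner_Integration.integral_sum) auto
  finally show ?thesis .
qed

lemma final_arith:
  fixes n :: nat and C2 d2 S1 s0 T :: real
  assumes n: "n \<ge> 2" and d: "0 \<le> d2" "d2 \<le> 1" and T: "T \<le> (real n - 1) * s0"
  shows "C2 * (1 - 1 / real n) * S1 + (1 / real n + d2 * (1 - 1 / real n)) * (s0 + T)
    \<le> C2 * (real n - 1) * ((1 / real n) * S1) + d2 * (real n - 1) * ((1 / (real n - 1)) * T) + s0"
proof -
  have n0: "real n > 0" "real n - 1 > 0" using n by auto
  have e1: "C2 * (1 - 1 / real n) * S1 = C2 * (real n - 1) * ((1 / real n) * S1)"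
    using n0 by (simp add: field_simps)
  have e2: "d2 * (real n - 1) * ((1 / (real n - 1)) * T) = d2 * T" using n0 by simp
  have key: "(1 - d2) * (T - (real n - 1) * s0) \<le> 0"
    using d T by (intro mult_nonneg_nonpos) auto
  have "(1 / real n + d2 * (1 - 1 / real n)) * (s0 + T) - (d2 * T + s0)
        = (1 - d2) * (T - (real n - 1) * s0) / real n"
    using n0 by (simp add: field_simps)
  also have "\<dots> \<le> 0" using key n0 by (simp add: divide_nonpos_pos)
  finally show ?thesis unfolding e2 using e1 by linarith
qed

theorem corollary5:
  fixes n :: nat and W :: "real mat" and M :: "'w measure"
    and X E :: "nat \<Rightarrow> 'w \<Rightarrow> real" and \<mu> \<alpha> :: real and s \<sigma> :: "nat \<Rightarrow> real"
  assumes n2: "n \<ge> 2"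
    and graph: "weighted_connected_graph n W"
    and prob: "prob_space M"
    and s_nonneg: "\<forall>i<n. s i \<ge> 0"
    and X_indep: "prob_space.indep_vars M (\<lambda>_. borel) X {0..<n}"
    and X_gauss: "\<forall>i<n. distr M borel (X i) = gaussian \<mu> (s i)"
    and E_meas: "\<forall>i<n. E i \<in> borel_measurable M"
    and E_int: "\<forall>i<n. integrable M (E i)"
    and E_sq_int: "\<forall>i<n. integrable M (\<lambda>\<omega>. (E i \<omega>)\<^sup>2)"
    and E_mean: "\<forall>i<n. integral\<^sup>L M (E i) = 0"
    and E_cov: "\<forall>i<n. \<forall>j<n. integral\<^sup>L M (\<lambda>\<omega>. E i \<omega> * E j \<omega>) = (if i = j then (\<sigma> i)\<^sup>2 else 0)"
    and \<sigma>_sorted: "\<forall>i j. i \<le> j \<longrightarrow> j < n \<longrightarrow> (\<sigma> j)\<^sup>2 \<le> (\<sigma> i)\<^sup>2"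
    and XE_indep: "prob_space.indep_var M
        (PiM {0..<n} (\<lambda>_. borel)) (\<lambda>\<omega>. \<lambda>i\<in>{0..<n}. X i \<omega>)
        (PiM {0..<n} (\<lambda>_. borel)) (\<lambda>\<omega>. \<lambda>i\<in>{0..<n}. E i \<omega>)"
    and \<alpha>_pos: "\<alpha> > 0"
  shows "smoothing_mse M n W X E \<alpha> \<le>
     (1 / (1 + 1 / (\<alpha> * eigs (laplacian n W) ! (n - 1))))\<^sup>2 * (real n - 1)
        * ((1 / real n) * (\<Sum>i<n. (s i)\<^sup>2))
   + (1 / (1 + \<alpha> * eigs (laplacian n W) ! 1))\<^sup>2 * (real n - 1)
        * ((1 / (real n - 1)) * (\<Sum>i\<in>{1..<n}. (\<sigma> i)\<^sup>2))
   + (\<sigma> 0)\<^sup>2"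
proof -
  interpret P: prob_space M by (rule prob)
  define L where "L = laplacian n W"
  define H where "H = the (mat_inverse (1\<^sub>m n + \<alpha> \<cdot>\<^sub>m L))"
  have MF: "H \<in> carrier_mat n n" "\<forall>i<n. (\<Sum>j<n. H$$(i,j)) = 1"
    "\<forall>j<n. (\<Sum>i<n. (H$$(i,j) - (if i = j then 1 else 0))^2)
         \<le> (1 / (1 + 1 / (\<alpha> * eigs L ! (n-1))))^2 * (1 - 1 / real n)"
    "\<forall>j<n. (\<Sum>i<n. (H$$(i,j))^2) \<le> 1 / real n + (1 / (1 + \<alpha> * eigs L ! 1))^2 * (1 - 1 / real n)"
    "0 \<le> eigs L ! 1"
    using smoothing_matrix_facts[OF graph \<alpha>_pos n2] unfolding L_def H_def by auto
  have n0: "n > 0" using n2 by simp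
  have Xm: "X j \<in> borel_measurable M" if "j < n" for j
    using X_indep that unfolding P.indep_vars_def by auto
  define xt where "xt j \<omega> = X j \<omega> - \<mu>" for j \<omega>
  have xtm: "xt j \<in> borel_measurable M" if "j < n" for j
    unfolding xt_def using Xm[OF that] by auto
  have Em: "E j \<in> borel_measurable M" if "j < n" for j using E_meas that by auto
  note GM = gauss_moments[OF prob Xm X_gauss[rule_format] s_nonneg[rule_format]]
  have G1: "integrable M (xt j)" "integral\<^sup>L M (xt j) = 0"
    "integrable M (\<lambda>\<omega>. (xt j \<omega>)^2)" "integral\<^sup>L M (\<lambda>\<omega>. (xt j \<omega>)^2) = (s j)^2" if "j < n" for j
    using GM[OF that that that] unfolding xt_def by auto
  have iXX: "integrable M (\<lambda>\<omega>. xt j \<omega> * xt k \<omega>)" if "j < n" "k < n" for j k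
    using sq_int_prod[OF xtm[OF that(1)] xtm[OF that(2)] G1(3)[OF that(1)] G1(3)[OF that(2)]] .
  have iXE: "integrable M (\<lambda>\<omega>. xt j \<omega> * E k \<omega>)" if "j < n" "k < n" for j k
    using sq_int_prod[OF xtm[OF that(1)] Em[OF that(2)] G1(3)[OF that(1)]] E_sq_int that by auto
  have iEE: "integrable M (\<lambda>\<omega>. E j \<omega> * E k \<omega>)" if "j < n" "k < n" for j k
    using sq_int_prod[OF Em[OF that(1)] Em[OF that(2)]] E_sq_int that by auto
  have eXX: "integral\<^sup>L M (\<lambda>\<omega>. xt j \<omega> * xt k \<omega>) = (if j = k then (s j)^2 else 0)" if jk: "j < n" "k < n" for j k
  proof (cases "j = k")
    case True thus ?thesis using G1(4)[OF jk(1)] by (simp add: power2_eq_square)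
  next
    case False
    have "P.indep_var (PiM {j} (\<lambda>_. borel)) (\<lambda>\<omega>. restrict (\<lambda>i. X i \<omega>) {j})
                      (PiM {k} (\<lambda>_. borel)) (\<lambda>\<omega>. restrict (\<lambda>i. X i \<omega>) {k})"
      by (rule P.indep_var_restrict[OF X_indep]) (use False jk in auto)
    from P.indep_var_compose[OF this, of "\<lambda>f. f j - \<mu>" borel "\<lambda>f. f k - \<mu>" borel]
    have "P.indep_var borel (xt j) borel (xt k)"
      unfolding xt_def comp_def by (simp add: measurable_component_singleton)
    hence "integral\<^sup>L M (\<lambda>\<omega>. xt j \<omega> * xt k \<omega>) = integral\<^sup>L M (xt j) * integral\<^sup>L M (xt k)"
      using G1(1)[OF jk(1)] G1(1)[OF jk(2)] by (rule P.indep_var_lebesgue_integral)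
    thus ?thesis using G1(2)[OF jk(1)] False by simp
  qed
  have eXE: "integral\<^sup>L M (\<lambda>\<omega>. xt j \<omega> * E k \<omega>) = 0" if jk: "j < n" "k < n" for j k
  proof -
    from P.indep_var_compose[OF XE_indep, of "\<lambda>f. f j - \<mu>" borel "\<lambda>f. f k" borel]
    have "P.indep_var borel (xt j) borel (E k)"
      unfolding xt_def comp_def using jk by (simp add: measurable_component_singleton)
    hence "integral\<^sup>L M (\<lambda>\<omega>. xt j \<omega> * E k \<omega>) = integral\<^sup>L M (xt j) * integral\<^sup>L M (E k)"
      using G1(1)[OF jk(1)] E_int jk(2) by (intro P.indep_var_lebesgue_integral) auto
    thus ?thesis using G1(2)[OF jk(1)] by simp
  qed
  define hm where "hm i j = H$$(i,j) - (if i = j then 1 else 0)" for i j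
  define h where "h i j = H$$(i,j)" for i j
  define T where "T i j k \<omega> = hm i j * hm i k * (xt j \<omega> * xt k \<omega>) + 2 * hm i j * h i k * (xt j \<omega> * E k \<omega>)
      + h i j * h i k * (E j \<omega> * E k \<omega>)" for i j k \<omega>
  have pw: "(let y = vec n (\<lambda>j. X j \<omega> + E j \<omega>); xh = H *\<^sub>v y in \<Sum>i<n. (xh $ i - X i \<omega>)^2)
      = (\<Sum>i<n. \<Sum>j<n. \<Sum>k<n. T i j k \<omega>)" for \<omega>
  proof -
    have row: "(H *\<^sub>v vec n (\<lambda>j. X j \<omega> + E j \<omega>)) $ i - X i \<omega>
        = (\<Sum>j<n. hm i j * xt j \<omega>) + (\<Sum>j<n. h i j * E j \<omega>)" if i: "i < n" for i
    proof -
      have "(H *\<^sub>v vec n (\<lambda>j. X j \<omega> + E j \<omega>)) $ i = (\<Sum>j<n. H$$(i,j) * (X j \<omega> + E j \<omega>))"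
        using MF(1) i by (auto simp: scalar_prod_def atLeast0LessThan intro!: sum.cong)
      also have "\<dots> = (\<Sum>j<n. H$$(i,j) * xt j \<omega>) + \<mu> * (\<Sum>j<n. H$$(i,j)) + (\<Sum>j<n. H$$(i,j) * E j \<omega>)"
        unfolding xt_def by (simp add: algebra_simps sum.distrib sum_subtractf sum_distrib_left)
      also have "(\<Sum>j<n. H$$(i,j)) = 1" using MF(2) i by auto
      also have "(\<Sum>j<n. H$$(i,j) * xt j \<omega>) = (\<Sum>j<n. hm i j * xt j \<omega>) + xt i \<omega>"
      proof -
        have "(\<Sum>j<n. hm i j * xt j \<omega>) = (\<Sum>j<n. H$$(i,j) * xt j \<omega>) - (\<Sum>j<n. xt j \<omega> * (if i = j then 1 else 0))"
          unfolding hm_def by (simp add: algebra_simps sum_subtractf)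
        also have "(\<Sum>j<n. xt j \<omega> * (if i = j then 1 else 0)) = xt i \<omega>" using kron_sum1[OF i] by simp
        finally show ?thesis by simp
      qed
      finally show ?thesis unfolding h_def xt_def by simp
    qed
    have "(\<Sum>i<n. ((H *\<^sub>v vec n (\<lambda>j. X j \<omega> + E j \<omega>)) $ i - X i \<omega>)^2)
        = (\<Sum>i<n. ((\<Sum>j<n. hm i j * xt j \<omega>) + (\<Sum>j<n. h i j * E j \<omega>))^2)"
      using row by simp
    also have "\<dots> = (\<Sum>i<n. \<Sum>j<n. \<Sum>k<n. T i j k \<omega>)"
      unfolding T_def sq_expand ..
    finally show ?thesis by (simp add: Let_def)
  qed
  have intT: "integrable M (T i j k)" if "i < n" "j < n" "k < n" for i j k
    unfolding T_def using iXX[OF that(2,3)] iXE[OF that(2,3)] iEE[OF that(2,3)] by auto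
  have eT: "integral\<^sup>L M (T i j k) = hm i j * hm i k * (if j = k then (s j)^2 else 0)
      + h i j * h i k * (if j = k then (\<sigma> j)^2 else 0)" if ijk: "i < n" "j < n" "k < n" for i j k
  proof -
    have "integral\<^sup>L M (T i j k) = hm i j * hm i k * integral\<^sup>L M (\<lambda>\<omega>. xt j \<omega> * xt k \<omega>)
       + 2 * hm i j * h i k * integral\<^sup>L M (\<lambda>\<omega>. xt j \<omega> * E k \<omega>)
       + h i j * h i k * integral\<^sup>L M (\<lambda>\<omega>. E j \<omega> * E k \<omega>)"
      unfolding T_def using iXX[OF ijk(2,3)] iXE[OF ijk(2,3)] iEE[OF ijk(2,3)]
      by (simp add: Bochner_Integration.integral_add integral_mult_right_zero)
    thus ?thesis using eXX[OF ijk(2,3)] eXE[OF ijk(2,3)] E_cov ijk by simp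
  qed
  have "smoothing_mse M n W X E \<alpha> = integral\<^sup>L M (\<lambda>\<omega>. \<Sum>i<n. \<Sum>j<n. \<Sum>k<n. T i j k \<omega>)"
    unfolding smoothing_mse_def L_def[symmetric] H_def[symmetric] pw ..
  also have "\<dots> = (\<Sum>i<n. \<Sum>j<n. \<Sum>k<n. integral\<^sup>L M (T i j k))"
    by (rule integral_sum3) (rule intT)
  also have "\<dots> = (\<Sum>i<n. \<Sum>j<n. (hm i j)^2 * (s j)^2 + (h i j)^2 * (\<sigma> j)^2)"
  proof (intro sum.cong refl)
    fix i j assume ij: "i \<in> {..<n}" "j \<in> {..<n}"
    have "(\<Sum>k<n. integral\<^sup>L M (T i j k)) = (\<Sum>k<n. (hm i j * hm i k * (s j)^2 + h i j * h i k * (\<sigma> j)^2) * (if j = k then 1 else 0))"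
      using ij by (intro sum.cong refl) (simp add: eT)
    also have "\<dots> = (hm i j)^2 * (s j)^2 + (h i j)^2 * (\<sigma> j)^2"
      using kron_sum1[of j n] ij by (simp add: power2_eq_square)
    finally show "(\<Sum>k<n. integral\<^sup>L M (T i j k)) = (hm i j)^2 * (s j)^2 + (h i j)^2 * (\<sigma> j)^2" .
  qed
  also have "\<dots> = (\<Sum>j<n. \<Sum>i<n. (hm i j)^2 * (s j)^2 + (h i j)^2 * (\<sigma> j)^2)" by (rule sum.swap)
  also have "\<dots> = (\<Sum>j<n. (s j)^2 * (\<Sum>i<n. (hm i j)^2) + (\<sigma> j)^2 * (\<Sum>i<n. (h i j)^2))"
    by (simp add: sum.distrib sum_distrib_left mult_ac)
  also have "\<dots> \<le> (\<Sum>j<n. (s j)^2 * ((1 / (1 + 1 / (\<alpha> * eigs L ! (n-1))))^2 * (1 - 1 / real n))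
       + (\<sigma> j)^2 * (1 / real n + (1 / (1 + \<alpha> * eigs L ! 1))^2 * (1 - 1 / real n)))"
  proof (rule sum_mono)
    fix j assume j: "j \<in> {..<n}"
    have "(s j)^2 * (\<Sum>i<n. (hm i j)^2) \<le> (s j)^2 * ((1 / (1 + 1 / (\<alpha> * eigs L ! (n-1))))^2 * (1 - 1 / real n))"
      using MF(3) j unfolding hm_def by (intro mult_left_mono) auto
    moreover have "(\<sigma> j)^2 * (\<Sum>i<n. (h i j)^2) \<le> (\<sigma> j)^2 * (1 / real n + (1 / (1 + \<alpha> * eigs L ! 1))^2 * (1 - 1 / real n))"
      using MF(4) j unfolding h_def by (intro mult_left_mono) auto
    ultimately show "(s j)^2 * (\<Sum>i<n. (hm i j)^2) + (\<sigma> j)^2 * (\<Sum>i<n. (h i j)^2)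
      \<le> (s j)^2 * ((1 / (1 + 1 / (\<alpha> * eigs L ! (n-1))))^2 * (1 - 1 / real n))
       + (\<sigma> j)^2 * (1 / real n + (1 / (1 + \<alpha> * eigs L ! 1))^2 * (1 - 1 / real n))" by linarith
  qed
  also have "\<dots> = (1 / (1 + 1 / (\<alpha> * eigs L ! (n-1))))^2 * (1 - 1 / real n) * (\<Sum>j<n. (s j)^2)
       + (1 / real n + (1 / (1 + \<alpha> * eigs L ! 1))^2 * (1 - 1 / real n)) * ((\<sigma> 0)^2 + (\<Sum>i\<in>{1..<n}. (\<sigma> i)^2))"
  proof -
    have "{..<n} = insert 0 {1..<n}" using n0 by auto
    hence hs: "(\<Sum>j<n. (\<sigma> j)^2) = (\<sigma> 0)^2 + (\<Sum>i\<in>{1..<n}. (\<sigma> i)^2)" by simp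
    have gen: "(\<Sum>j<n. (s j)^2 * c1 + (\<sigma> j)^2 * c2) = c1 * (\<Sum>j<n. (s j)^2) + c2 * (\<Sum>j<n. (\<sigma> j)^2)"
      for c1 c2 :: real by (simp add: sum.distrib sum_distrib_left mult_ac)
    show ?thesis unfolding gen hs by (simp add: mult_ac)
  qed
  also have "\<dots> \<le> (1 / (1 + 1 / (\<alpha> * eigs L ! (n-1))))^2 * (real n - 1) * ((1 / real n) * (\<Sum>i<n. (s i)^2))
     + (1 / (1 + \<alpha> * eigs L ! 1))^2 * (real n - 1) * ((1 / (real n - 1)) * (\<Sum>i\<in>{1..<n}. (\<sigma> i)^2))
     + (\<sigma> 0)^2"
  proof (rule final_arith[OF n2])
    have l2: "0 \<le> \<alpha> * eigs L ! 1" using MF(5) \<alpha>_pos by simp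
    show "0 \<le> (1 / (1 + \<alpha> * eigs L ! 1))^2" by simp
    show "(1 / (1 + \<alpha> * eigs L ! 1))^2 \<le> 1" using l2 by (simp add: power_le_one)
    have "(\<Sum>i\<in>{1..<n}. (\<sigma> i)^2) \<le> (\<Sum>i\<in>{1..<n}. (\<sigma> 0)^2)"
      using \<sigma>_sorted by (intro sum_mono) auto
    thus "(\<Sum>i\<in>{1..<n}. (\<sigma> i)^2) \<le> (real n - 1) * (\<sigma> 0)^2" using n0 by (simp add: of_nat_diff)
  qed
  finally show ?thesis unfolding L_def .
qed

end
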